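(* Let $f$ be a partitioning of the complete directed graph with loops $K_N$ (vertex set $V$, $|V|=N$, edge set $V\times V$) into $n$ partitions such that $\mathrm{ib}(f)\le 1+\varepsilon$ and $\mathrm{rf}(f)=k$. Then there exists an $\varepsilon$-balanced intersecting system on $n$ elements with cardinality $k$.
   Context: A partitioning of a directed graph $G=(V,E)$ into $n$ partitions is a function $f:E\to P$, $|P|=n$ (identify $P=[n]$). Its imbalance is $\mathrm{ib}(f)=\dfrac{\max_{l\in P}|\{e\in E: f(e)=l\}|}{|E|/n}$. For $v\in V$, $E(v)$ is the set of edges incident to $v$, $\mathrm{rf}(f,v)=|f(E(v))|$, and $\mathrm{rf}(f)=\max_{v\in V}\mathrm{rf}(f,v)$. A system on $n$ elements is a triple $(\mathcal{F},w,s)$ where $\mathcal{F}=(F_1,\dots,F_m)$ is a collection of subsets of $[n]$, $w\in[0,1]^m$ with $\sum_i w_i=1$, and $s\in[0,1]^{m\times m\times n}$ with $\sum_p s_{ijp}=1$ for all $i,j$. It is intersecting if $s_{ijp}>0$ implies $p\in F_i\cap F_j$. It is $\varepsilon$-balanced if for all $p\in[n]$, $\sum_{i=1}^m\sum_{j=1}^m w_iw_js_{ijp}\le (1+\varepsilon)/n$. Its cardinality is the size of the largest set in $\mathcal{F}$. *)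

theory Defs
  imports Complex_Main "HOL-Library.FuncSet"
begin

definition edges_of :: "'a set \<Rightarrow> ('a \<times> 'a) set" where
  "edges_of V = V \<times> V"

definition is_partitioning :: "'a set \<Rightarrow> nat \<Rightarrow> ('a \<times> 'a \<Rightarrow> nat) \<Rightarrow> bool" where
  "is_partitioning V n f \<longleftrightarrow> f \<in> edges_of V \<rightarrow> {..<n}"

definition ib :: "'a set \<Rightarrow> nat \<Rightarrow> ('a \<times> 'a \<Rightarrow> nat) \<Rightarrow> real" where
  "ib V n f = real (Max ((\<lambda>l. card {e \<in> edges_of V. f e = l}) ` {..<n}))
              / (real (card (edges_of V)) / real n)"

definition inc_edges :: "'a set \<Rightarrow> 'a \<Rightarrow> ('a \<times> 'a) set" where
  "inc_edges V v = {e \<in> edges_of V. fst e = v \<or> snd e = v}"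

definition rf_v :: "'a set \<Rightarrow> ('a \<times> 'a \<Rightarrow> nat) \<Rightarrow> 'a \<Rightarrow> nat" where
  "rf_v V f v = card (f ` inc_edges V v)"

definition rf :: "'a set \<Rightarrow> ('a \<times> 'a \<Rightarrow> nat) \<Rightarrow> nat" where
  "rf V f = Max (rf_v V f ` V)"

text \<open>A system on n elements with m sets F 0..F (m-1) (indices shifted to 0-based),
  weights w and distributions s; elements are {0..<n}.\<close>
definition is_system :: "nat \<Rightarrow> nat \<Rightarrow> (nat \<Rightarrow> nat set) \<Rightarrow> (nat \<Rightarrow> real)
    \<Rightarrow> (nat \<Rightarrow> nat \<Rightarrow> nat \<Rightarrow> real) \<Rightarrow> bool" where
  "is_system n m F w s \<longleftrightarrow>
     (\<forall>i<m. F i \<subseteq> {..<n}) \<and>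
     (\<forall>i<m. 0 \<le> w i \<and> w i \<le> 1) \<and> (\<Sum>i<m. w i) = 1 \<and>
     (\<forall>i<m. \<forall>j<m. \<forall>p<n. 0 \<le> s i j p \<and> s i j p \<le> 1) \<and>
     (\<forall>i<m. \<forall>j<m. (\<Sum>p<n. s i j p) = 1)"

definition intersecting :: "nat \<Rightarrow> nat \<Rightarrow> (nat \<Rightarrow> nat set) \<Rightarrow> (nat \<Rightarrow> nat \<Rightarrow> nat \<Rightarrow> real) \<Rightarrow> bool" where
  "intersecting n m F s \<longleftrightarrow>
     (\<forall>i<m. \<forall>j<m. \<forall>p<n. s i j p > 0 \<longrightarrow> p \<in> F i \<inter> F j)"

definition eps_balanced :: "real \<Rightarrow> nat \<Rightarrow> nat \<Rightarrow> (nat \<Rightarrow> real) \<Rightarrow> (nat \<Rightarrow> nat \<Rightarrow> nat \<Rightarrow> real) \<Rightarrow> bool" where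
  "eps_balanced \<epsilon> n m w s \<longleftrightarrow>
     (\<forall>p<n. (\<Sum>i<m. \<Sum>j<m. w i * w j * s i j p) \<le> (1 + \<epsilon>) / real n)"

definition system_card :: "nat \<Rightarrow> (nat \<Rightarrow> nat set) \<Rightarrow> nat" where
  "system_card m F = Max ((\<lambda>i. card (F i)) ` {..<m})"

end

theory Submission
  imports Defs
begin

theorem lemma2:
  fixes V :: "'a set" and n k :: nat and \<epsilon> :: real and f :: "'a \<times> 'a \<Rightarrow> nat"
  assumes "finite V" and "V \<noteq> {}" and "n \<ge> 1"
    and "is_partitioning V n f"
    and "ib V n f \<le> 1 + \<epsilon>"
    and "rf V f = k"
  shows "\<exists>m F w s. is_system n m F w s \<and> intersecting n m F s
           \<and> eps_balanced \<epsilon> n m w s \<and> system_card m F = k"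
proof -
  define N where "N = card V"
  have N1: "N \<ge> 1" using assms(1,2) N_def by (simp add: Suc_leI card_gt_0_iff)
  obtain g where g: "bij_betw g {..<N} V"
    using ex_bij_betw_nat_finite[OF assms(1)] N_def by (auto simp: lessThan_atLeast0)
  have gV: "g i \<in> V" if "i < N" for i using g that bij_betwE by blast
  have fn: "f (x, y) < n" if "x \<in> V" "y \<in> V" for x y
    using assms(4) that unfolding is_partitioning_def edges_of_def by auto
  define F where "F = (\<lambda>i. f ` inc_edges V (g i))"
  define w :: "nat \<Rightarrow> real" where "w = (\<lambda>i. 1 / real N)"
  define s :: "nat \<Rightarrow> nat \<Rightarrow> nat \<Rightarrow> real" where
    "s = (\<lambda>i j p. if f (g i, g j) = p then 1 else 0)"
  have sys: "is_system n N F w s"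
    unfolding is_system_def
  proof (intro conjI allI impI)
    fix i assume "i < N"
    show "F i \<subseteq> {..<n}"
      using assms(4) unfolding F_def is_partitioning_def inc_edges_def by auto
    show "0 \<le> w i" by (simp add: w_def)
    show "w i \<le> 1" using N1 by (simp add: w_def)
  next
    show "(\<Sum>i<N. w i) = 1" using N1 by (simp add: w_def)
  next
    fix i j p assume "i < N" "j < N" "p < n"
    show "0 \<le> s i j p" "s i j p \<le> 1" by (auto simp: s_def)
  next
    fix i j assume "i < N" "j < N"
    then have "f (g i, g j) < n" using fn gV by auto
    then show "(\<Sum>p<n. s i j p) = 1"
      unfolding s_def by (simp add: sum.delta)
  qed
  have int: "intersecting n N F s"
    unfolding intersecting_def
  proof (intro allI impI)
    fix i j p assume "i < N" "j < N" "p < n" "0 < s i j p"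
    then have p: "p = f (g i, g j)" by (auto simp: s_def split: if_splits)
    have "(g i, g j) \<in> inc_edges V (g i)" "(g i, g j) \<in> inc_edges V (g j)"
      using gV \<open>i < N\<close> \<open>j < N\<close> by (auto simp: inc_edges_def edges_of_def)
    then show "p \<in> F i \<inter> F j" unfolding F_def p by auto
  qed
  have fin_E: "finite (edges_of V)" using assms(1) by (simp add: edges_of_def)
  have cardE: "card (edges_of V) = N * N" by (simp add: edges_of_def N_def card_cartesian_product)
  have bal: "eps_balanced \<epsilon> n N w s"
    unfolding eps_balanced_def
  proof (intro allI impI)
    fix p assume pn: "p < n"
    define h :: "'a \<times> 'a \<Rightarrow> real" where "h = (\<lambda>e. if f e = p then 1 else 0)"
    have "(\<Sum>i<N. \<Sum>j<N. w i * w j * s i j p) = (1 / (real N * real N)) * (\<Sum>i<N. \<Sum>j<N. h (g i, g j))"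
      by (simp add: w_def s_def h_def sum_distrib_left)
    also have "(\<Sum>i<N. \<Sum>j<N. h (g i, g j)) = (\<Sum>x\<in>V. \<Sum>y\<in>V. h (x, y))"
    proof -
      have "(\<Sum>i<N. \<Sum>j<N. h (g i, g j)) = (\<Sum>i<N. \<Sum>y\<in>V. h (g i, y))"
        by (rule sum.cong[OF refl], rule sum.reindex_bij_betw[OF g])
      also have "\<dots> = (\<Sum>x\<in>V. \<Sum>y\<in>V. h (x, y))"
        using sum.reindex_bij_betw[OF g, of "\<lambda>x. \<Sum>y\<in>V. h (x, y)"] by simp
      finally show ?thesis .
    qed
    also have "\<dots> = (\<Sum>e\<in>edges_of V. h e)"
      by (simp add: edges_of_def sum.cartesian_product)
    also have "\<dots> = real (card {e \<in> edges_of V. f e = p})"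
      unfolding h_def using fin_E by (simp add: sum.If_cases Int_def)
    finally have eq: "(\<Sum>i<N. \<Sum>j<N. w i * w j * s i j p) = real (card {e \<in> edges_of V. f e = p}) / (real N * real N)"
      by simp
    define M where "M = Max ((\<lambda>l. card {e \<in> edges_of V. f e = l}) ` {..<n})"
    have cM: "card {e \<in> edges_of V. f e = p} \<le> M"
      unfolding M_def using pn by (intro Max_ge) auto
    have "real M / (real (N * N) / real n) \<le> 1 + \<epsilon>"
      using assms(5) unfolding ib_def M_def cardE .
    then have "real M * real n \<le> (1 + \<epsilon>) * (real N * real N)"
      using N1 assms(3) by (simp add: field_simps)
    then have "real (card {e \<in> edges_of V. f e = p}) * real n \<le> (1 + \<epsilon>) * (real N * real N)"
    proof -
      have "real (card {e \<in> edges_of V. f e = p}) * real n \<le> real M * real n"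
        using cM by (intro mult_right_mono) auto
      then show ?thesis using \<open>real M * real n \<le> (1 + \<epsilon>) * (real N * real N)\<close> by linarith
    qed
    then show "(\<Sum>i<N. \<Sum>j<N. w i * w j * s i j p) \<le> (1 + \<epsilon>) / real n"
      unfolding eq using N1 assms(3) by (simp add: field_simps)
  qed
  have sc: "system_card N F = k"
  proof -
    have "(\<lambda>i. card (F i)) ` {..<N} = rf_v V f ` V"
      unfolding F_def rf_v_def using bij_betw_imp_surj_on[OF g] image_image[of "\<lambda>v. card (f ` inc_edges V v)" g "{..<N}"] by simp
    then show ?thesis using assms(6) unfolding system_card_def rf_def by simp
  qed
  show ?thesis using sys int bal sc by blast
qed

end
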